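(* For every nonnegative integer $n$, the number of permutations in $\mathfrak S_n$ that avoid each of the classical patterns $132$, $3214$ and $4213$ is $|\mathrm{Av}_n(132,3214,4213)|=2^n-n$.
   Context: $\mathfrak S_n$ is the set of permutations of $\{1,\dots,n\}$ (with $\mathfrak S_0$ consisting of the empty permutation). A permutation $\tau$ contains a classical pattern $\sigma\in\mathfrak S_k$ if it has a subsequence $\tau_{i_1}\cdots\tau_{i_k}$ ($i_1<\dots<i_k$) with the same relative order as $\sigma$; otherwise it avoids $\sigma$. $\mathrm{Av}_n(\dots)$ denotes the set of permutations in $\mathfrak S_n$ avoiding all listed patterns. *)

theory Defs
  imports Main
begin

definition perms :: "nat \<Rightarrow> nat list set" where
  "perms n = {xs. distinct xs \<and> set xs = {1..n}}"

definition contains :: "nat list \<Rightarrow> nat list \<Rightarrow> bool" where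
  "contains tau sigma \<longleftrightarrow>
     (\<exists>idx :: nat \<Rightarrow> nat.
        (\<forall>a b. a < b \<and> b < length sigma \<longrightarrow> idx a < idx b) \<and>
        (\<forall>a < length sigma. idx a < length tau) \<and>
        (\<forall>a < length sigma. \<forall>b < length sigma.
            (tau ! idx a < tau ! idx b) \<longleftrightarrow> (sigma ! a < sigma ! b)))"

definition avoids :: "nat list \<Rightarrow> nat list \<Rightarrow> bool" where
  "avoids tau sigma \<longleftrightarrow> \<not> contains tau sigma"

definition Av :: "nat \<Rightarrow> nat list list \<Rightarrow> nat list set" where
  "Av n pats = {tau \<in> perms n. \<forall>sigma \<in> set pats. avoids tau sigma}"

end

theory Submission
  imports Defs "HOL-Library.Sublist"
begin


lemma subseq_idx:
  "subseq xs ys \<Longrightarrow> \<exists>idx. (\<forall>a b. a<b \<and> b<length xs \<longrightarrow> idx a < idx b) \<and>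
     (\<forall>a<length xs. idx a < length ys \<and> ys!idx a = xs!a)"
proof (induction rule: list_emb.induct)
  case (list_emb_Nil ys)
  then show ?case by auto
next
  case (list_emb_Cons xs ys y)
  then obtain idx where i: "(\<forall>a b. a<b \<and> b<length xs \<longrightarrow> idx a < idx b)"
     "(\<forall>a<length xs. idx a < length ys \<and> ys!idx a = xs!a)" by blast
  show ?case by (rule exI[of _ "\<lambda>a. Suc (idx a)"]) (use i in auto)
next
  case (list_emb_Cons2 x y xs ys)
  then obtain idx where i: "(\<forall>a b. a<b \<and> b<length xs \<longrightarrow> idx a < idx b)"
     "(\<forall>a<length xs. idx a < length ys \<and> ys!idx a = xs!a)" by blast
  show ?case
  proof (rule exI[of _ "\<lambda>a. if a = 0 then 0 else Suc (idx (a - 1))"], intro conjI allI impI)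
    fix a b assume "a < b \<and> b < length (x # xs)"
    then show "(if a = 0 then 0 else Suc (idx (a - 1))) < (if b = 0 then 0 else Suc (idx (b - 1)))"
      using i(1)[rule_format, of "a-1" "b-1"] by (cases a; cases b) auto
  next
    fix a assume "a < length (x#xs)"
    then show "(if a = 0 then 0 else Suc (idx (a - 1))) < length (y # ys)"
      using i(2)[rule_format, of "a-1"] list_emb_Cons2.hyps by (cases a) auto
  next
    fix a assume "a < length (x#xs)"
    then show "(y # ys) ! (if a = 0 then 0 else Suc (idx (a - 1))) = (x # xs) ! a"
      using i(2)[rule_format, of "a-1"] list_emb_Cons2.hyps by (cases a) auto
  qed
qed

lemma idx_subseq:
  "(\<forall>a b. a<b \<and> b<k \<longrightarrow> idx a < idx b) \<Longrightarrow> (\<forall>a<k. idx a < length ys) \<Longrightarrow>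
   subseq (map (\<lambda>a. ys ! idx a) [0..<k]) ys"
proof (induction ys arbitrary: idx k)
  case Nil
  then show ?case by (cases k) auto
next
  case (Cons y ys)
  show ?case
  proof (cases k)
    case 0
    then show ?thesis by simp
  next
    case (Suc k')
    show ?thesis
    proof (cases "idx 0 = 0")
      case True
      have pos: "idx (Suc a) > 0" if "a < k'" for a
        using Cons.prems(1)[rule_format, of 0 "Suc a"] True Suc that by simp
      have h1: "\<forall>a b. a<b \<and> b<k' \<longrightarrow> idx (Suc a) - 1 < idx (Suc b) - 1"
      proof (intro allI impI)
        fix a b assume ab: "a<b \<and> b<k'"
        then have "idx (Suc a) < idx (Suc b)" using Cons.prems(1)[rule_format, of "Suc a" "Suc b"] Suc by simp
        then show "idx (Suc a) - 1 < idx (Suc b) - 1" using pos[of a] ab by linarith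
      qed
      have h2: "\<forall>a<k'. idx (Suc a) - 1 < length ys"
      proof (intro allI impI)
        fix a assume "a < k'"
        then have "idx (Suc a) < Suc (length ys)" using Cons.prems(2) Suc by simp
        then show "idx (Suc a) - 1 < length ys" using pos[of a] \<open>a<k'\<close> by linarith
      qed
      have "subseq (map (\<lambda>a. ys ! ((\<lambda>a. idx (Suc a) - 1) a)) [0..<k']) ys"
        by (rule Cons.IH[OF h1 h2])
      moreover have "map (\<lambda>a. (y#ys) ! idx a) [0..<k] = y # map (\<lambda>a. ys ! ((\<lambda>a. idx (Suc a) - 1) a)) [0..<k']"
      proof -
        have "[0..<k] = 0 # map Suc [0..<k']" using Suc by (simp add: map_Suc_upt upt_conv_Cons)
        then show ?thesis using True pos by (auto simp: nth_Cons') (metis less_irrefl)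
      qed
      ultimately show ?thesis by simp
    next
      case False
      have pos: "idx a > 0" if "a < k" for a
        using Cons.prems(1)[rule_format, of 0 a] False that by (cases a) auto
      have h1: "\<forall>a b. a<b \<and> b<k \<longrightarrow> idx a - 1 < idx b - 1"
      proof (intro allI impI)
        fix a b assume ab: "a<b \<and> b<k"
        then have "idx a < idx b" using Cons.prems(1) by blast
        then show "idx a - 1 < idx b - 1" using pos[of a] ab by linarith
      qed
      have h2: "\<forall>a<k. idx a - 1 < length ys"
      proof (intro allI impI)
        fix a assume "a < k"
        then have "idx a < Suc (length ys)" using Cons.prems(2) by simp
        then show "idx a - 1 < length ys" using pos[of a] \<open>a<k\<close> by linarith
      qed
      have "subseq (map (\<lambda>a. ys ! ((\<lambda>a. idx a - 1) a)) [0..<k]) ys"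
        by (rule Cons.IH[OF h1 h2])
      moreover have "map (\<lambda>a. (y#ys) ! idx a) [0..<k] = map (\<lambda>a. ys ! ((\<lambda>a. idx a - 1) a)) [0..<k]"
        using pos by (auto intro!: map_cong simp: nth_Cons') (metis less_irrefl)
      ultimately show ?thesis by (metis list_emb_Cons)
    qed
  qed
qed

lemma contains_subseq:
  "contains tau sigma \<longleftrightarrow> (\<exists>ys. subseq ys tau \<and> length ys = length sigma \<and>
     (\<forall>a<length sigma. \<forall>b<length sigma. ys!a < ys!b \<longleftrightarrow> sigma!a < sigma!b))"
proof
  assume "contains tau sigma"
  then obtain idx where i: "(\<forall>a b. a < b \<and> b < length sigma \<longrightarrow> idx a < idx b)"
      "(\<forall>a < length sigma. idx a < length tau)"
      "(\<forall>a < length sigma. \<forall>b < length sigma.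
            (tau ! idx a < tau ! idx b) \<longleftrightarrow> (sigma ! a < sigma ! b))" unfolding contains_def by blast
  show "\<exists>ys. subseq ys tau \<and> length ys = length sigma \<and>
     (\<forall>a<length sigma. \<forall>b<length sigma. ys!a < ys!b \<longleftrightarrow> sigma!a < sigma!b)"
    by (rule exI[of _ "map (\<lambda>a. tau ! idx a) [0..<length sigma]"]) (use i idx_subseq[OF i(1,2)] in auto)
next
  assume "\<exists>ys. subseq ys tau \<and> length ys = length sigma \<and>
     (\<forall>a<length sigma. \<forall>b<length sigma. ys!a < ys!b \<longleftrightarrow> sigma!a < sigma!b)"
  then obtain ys where y: "subseq ys tau" "length ys = length sigma"
     "(\<forall>a<length sigma. \<forall>b<length sigma. ys!a < ys!b \<longleftrightarrow> sigma!a < sigma!b)" by blast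
  obtain idx where i: "(\<forall>a b. a<b \<and> b<length ys \<longrightarrow> idx a < idx b)"
     "(\<forall>a<length ys. idx a < length tau \<and> tau!idx a = ys!a)" using subseq_idx[OF y(1)] by blast
  show "contains tau sigma" unfolding contains_def
    by (rule exI[of _ idx]) (use i y in auto)
qed


definition P21 :: "nat list \<Rightarrow> bool" where "P21 t \<longleftrightarrow> (\<exists>a b. subseq [a,b] t \<and> b < a)"
definition P132 :: "nat list \<Rightarrow> bool" where "P132 t \<longleftrightarrow> (\<exists>a b c. subseq [a,b,c] t \<and> a < c \<and> c < b)"
definition P321 :: "nat list \<Rightarrow> bool" where "P321 t \<longleftrightarrow> (\<exists>a b c. subseq [a,b,c] t \<and> c < b \<and> b < a)"
definition P213 :: "nat list \<Rightarrow> bool" where "P213 t \<longleftrightarrow> (\<exists>a b c. subseq [a,b,c] t \<and> b < a \<and> a < c)"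
definition P3214 :: "nat list \<Rightarrow> bool" where "P3214 t \<longleftrightarrow> (\<exists>a b c d. subseq [a,b,c,d] t \<and> c < b \<and> b < a \<and> a < d)"
definition P4213 :: "nat list \<Rightarrow> bool" where "P4213 t \<longleftrightarrow> (\<exists>a b c d. subseq [a,b,c,d] t \<and> c < b \<and> b < d \<and> d < a)"

lemma all3: "(\<forall>i<(3::nat). P i) \<longleftrightarrow> P 0 \<and> P 1 \<and> P 2"
  by (auto simp: numeral_3_eq_3 numeral_2_eq_2 less_Suc_eq)
lemma all4: "(\<forall>i<(4::nat). P i) \<longleftrightarrow> P 0 \<and> P 1 \<and> P 2 \<and> P 3"
  by (auto simp: numeral_3_eq_3 eval_nat_numeral less_Suc_eq)
lemma len3: "length ys = 3 \<longleftrightarrow> (\<exists>a b c. ys = [a,b,c])"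
  by (auto simp: numeral_3_eq_3 length_Suc_conv)
lemma len4: "length ys = 4 \<longleftrightarrow> (\<exists>a b c d. ys = [a,b,c,d])"
  by (auto simp: eval_nat_numeral length_Suc_conv)

lemma ex3: "(\<exists>ys. length ys = 3 \<and> Q ys) \<longleftrightarrow> (\<exists>a b c. Q [a,b,c])" by (auto simp: len3)
lemma ex4: "(\<exists>ys. length ys = 4 \<and> Q ys) \<longleftrightarrow> (\<exists>a b c d. Q [a,b,c,d])"
proof
  assume "\<exists>ys. length ys = 4 \<and> Q ys" then show "\<exists>a b c d. Q [a,b,c,d]" by (auto simp: len4)
next
  assume "\<exists>a b c d. Q [a,b,c,d]" then obtain a b c d where "Q [a,b,c,d]" by blast
  then show "\<exists>ys. length ys = 4 \<and> Q ys" by (intro exI[of _ "[a,b,c,d]"]) simp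
qed

lemma contains3: "length s = 3 \<Longrightarrow> contains t s \<longleftrightarrow> (\<exists>a b c. subseq [a,b,c] t \<and>
   (\<forall>i<3. \<forall>j<3. [a,b,c]!i < [a,b,c]!j \<longleftrightarrow> s!i < s!j))"
proof -
  assume h: "length s = 3"
  have "contains t s \<longleftrightarrow> (\<exists>ys. length ys = 3 \<and> (subseq ys t \<and> (\<forall>i<3. \<forall>j<3. ys!i<ys!j \<longleftrightarrow> s!i<s!j)))"
    unfolding contains_subseq h by blast
  also have "\<dots> \<longleftrightarrow> (\<exists>a b c. subseq [a,b,c] t \<and> (\<forall>i<3. \<forall>j<3. [a,b,c]!i<[a,b,c]!j \<longleftrightarrow> s!i<s!j))"
    by (rule ex3)
  finally show ?thesis .
qed

lemma contains4: "length s = 4 \<Longrightarrow> contains t s \<longleftrightarrow> (\<exists>a b c d. subseq [a,b,c,d] t \<and>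
   (\<forall>i<4. \<forall>j<4. [a,b,c,d]!i < [a,b,c,d]!j \<longleftrightarrow> s!i < s!j))"
proof -
  assume h: "length s = 4"
  have "contains t s \<longleftrightarrow> (\<exists>ys. length ys = 4 \<and> (subseq ys t \<and> (\<forall>i<4. \<forall>j<4. ys!i<ys!j \<longleftrightarrow> s!i<s!j)))"
    unfolding contains_subseq h by blast
  also have "\<dots> \<longleftrightarrow> (\<exists>a b c d. subseq [a,b,c,d] t \<and> (\<forall>i<4. \<forall>j<4. [a,b,c,d]!i<[a,b,c,d]!j \<longleftrightarrow> s!i<s!j))"
    by (rule ex4)
  finally show ?thesis .
qed

lemma cond132: "(\<forall>i<3. \<forall>j<3. [a,b,c]!i < [a,b,c]!j \<longleftrightarrow> [1,3,2::nat]!i < [1,3,2]!j) \<longleftrightarrow> a<c \<and> c<(b::nat)"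
  apply (simp only: all3)
  apply simp
  apply (rule iffI)
  apply simp
  apply linarith
  done

lemma cond3214: "(\<forall>i<4. \<forall>j<4. [a,b,c,d]!i < [a,b,c,d]!j \<longleftrightarrow> [3,2,1,4::nat]!i < [3,2,1,4]!j) \<longleftrightarrow> c<b \<and> b<a \<and> a<(d::nat)"
  apply (simp only: all4)
  apply simp
  apply (rule iffI)
  apply simp
  apply linarith
  done

lemma cond4213: "(\<forall>i<4. \<forall>j<4. [a,b,c,d]!i < [a,b,c,d]!j \<longleftrightarrow> [4,2,1,3::nat]!i < [4,2,1,3]!j) \<longleftrightarrow> c<b \<and> b<d \<and> d<(a::nat)"
  apply (simp only: all4)
  apply simp
  apply (rule iffI)
  apply simp
  apply linarith
  done

lemma c132: "contains t [1,3,2] \<longleftrightarrow> P132 t"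
  by (simp only: contains3 cond132 P132_def length_Cons list.size)

lemma c3214: "contains t [3,2,1,4] \<longleftrightarrow> P3214 t"
  by (simp only: contains4 cond3214 P3214_def length_Cons list.size)

lemma c4213: "contains t [4,2,1,3] \<longleftrightarrow> P4213 t"
  by (simp only: contains4 cond4213 P4213_def length_Cons list.size)

lemma Av_eq: "Av n [[1,3,2], [3,2,1,4], [4,2,1,3]] = {t \<in> perms n. \<not> P132 t \<and> \<not> P3214 t \<and> \<not> P4213 t}"
  by (simp add: Av_def avoids_def c132[simplified] c3214[simplified] c4213[simplified])

lemma subseq_map_iff: "subseq ys (map f xs) \<longleftrightarrow> (\<exists>zs. subseq zs xs \<and> ys = map f zs)"
proof
  assume "subseq ys (map f xs)"
  then obtain N where "ys = nths (map f xs) N" using subseq_conv_nths by blast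
  then have "ys = map f (nths xs N)" "subseq (nths xs N) xs" by (auto simp: nths_map subseq_conv_nths)
  then show "\<exists>zs. subseq zs xs \<and> ys = map f zs" by blast
qed (auto intro: subseq_map)

lemma subseq_set: "subseq xs ys \<Longrightarrow> x \<in> set xs \<Longrightarrow> x \<in> set ys"
  by (induction rule: list_emb.induct) auto

lemma subseq_Cons_right: "subseq ys (x#B) \<longleftrightarrow> subseq ys B \<or> (\<exists>ys3. ys = x#ys3 \<and> subseq ys3 B)"
proof (cases ys)
  case Nil
  then show ?thesis by simp
next
  case (Cons y ys')
  show ?thesis
  proof (cases "y = x")
    case True
    then show ?thesis using Cons subseq_Cons'[of x ys' B] by auto
  next
    case False
    then show ?thesis using Cons by simp
  qed
qed

lemma subseq_split: "subseq ys (A @ x # B) \<longleftrightarrow> (\<exists>ys1 ys2. ys = ys1@ys2 \<and> subseq ys1 A \<and>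
   (subseq ys2 B \<or> (\<exists>ys3. ys2 = x#ys3 \<and> subseq ys3 B)))"
  by (simp only: subseq_append_iff subseq_Cons_right)


lemma cons_sub: "subseq (a#ys) (x#B) \<Longrightarrow> (a = x \<and> subseq ys B) \<or> subseq (a#ys) B"
  by (cases "a = x") auto

lemma split_gen: "subseq ys (A@B) \<Longrightarrow> (\<And>ys1 ys2. ys = ys1@ys2 \<Longrightarrow> subseq ys1 A \<Longrightarrow> subseq ys2 B \<Longrightarrow> P) \<Longrightarrow> P"
  by (auto simp: subseq_append_iff)

lemma app3: "[a,b,c] = ys1 @ ys2 \<longleftrightarrow> (ys1 = [] \<and> ys2 = [a,b,c]) \<or> (ys1 = [a] \<and> ys2 = [b,c]) \<or> (ys1 = [a,b] \<and> ys2 = [c]) \<or> (ys1 = [a,b,c] \<and> ys2 = [])"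
  by (auto simp: append_eq_Cons_conv Cons_eq_append_conv)

lemma app4: "[a,b,c,d] = ys1 @ ys2 \<longleftrightarrow> (ys1 = [] \<and> ys2 = [a,b,c,d]) \<or> (ys1 = [a] \<and> ys2 = [b,c,d]) \<or> (ys1 = [a,b] \<and> ys2 = [c,d]) \<or> (ys1 = [a,b,c] \<and> ys2 = [d]) \<or> (ys1 = [a,b,c,d] \<and> ys2 = [])"
  by (auto simp: append_eq_Cons_conv Cons_eq_append_conv)

lemma split3: "subseq [a,b,c] (A@B) \<Longrightarrow> subseq [a,b,c] A \<or> (subseq [a,b] A \<and> c \<in> set B) \<or> (a \<in> set A \<and> subseq [b,c] B) \<or> subseq [a,b,c] B"
  by (erule split_gen) (auto simp: app3 subseq_singleton_left)

lemma split4: "subseq [a,b,c,d] (A@B) \<Longrightarrow> subseq [a,b,c,d] A \<or> (subseq [a,b,c] A \<and> d \<in> set B) \<or> (subseq [a,b] A \<and> subseq [c,d] B) \<or> (a \<in> set A \<and> subseq [b,c,d] B) \<or> subseq [a,b,c,d] B"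
  by (erule split_gen) (auto simp: app4 subseq_singleton_left)

lemma split2: "subseq [a,b] (A@B) \<Longrightarrow> subseq [a,b] A \<or> (a \<in> set A \<and> b \<in> set B) \<or> subseq [a,b] B"
  by (erule split_gen) (auto simp: append_eq_Cons_conv Cons_eq_append_conv subseq_singleton_left)

lemma mem2: "subseq [a,b] ys \<Longrightarrow> a \<in> set ys \<and> b \<in> set ys"
  using subseq_set by fastforce
lemma mem3: "subseq [a,b,c] ys \<Longrightarrow> a \<in> set ys \<and> b \<in> set ys \<and> c \<in> set ys"
  using subseq_set by fastforce
lemma mem4: "subseq [a,b,c,d] ys \<Longrightarrow> a \<in> set ys \<and> b \<in> set ys \<and> c \<in> set ys \<and> d \<in> set ys"
  using subseq_set by fastforce

lemma sub3_drop: "subseq [a,b,c] ys \<Longrightarrow> subseq [a,b] ys \<and> subseq [b,c] ys \<and> subseq [a,c] ys"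
proof -
  assume h: "subseq [a,b,c] ys"
  have "subseq [a,b] ys" by (rule subseq_order.order_trans[OF _ h]) simp
  moreover have "subseq [b,c] ys" by (rule subseq_order.order_trans[OF _ h]) simp
  moreover have "subseq [a,c] ys" by (rule subseq_order.order_trans[OF _ h]) simp
  ultimately show ?thesis by blast
qed

lemma sub4_drop: "subseq [a,b,c,d] ys \<Longrightarrow> subseq [a,b,c] ys \<and> subseq [b,c,d] ys"
proof -
  assume h: "subseq [a,b,c,d] ys"
  have "subseq [a,b,c] ys" by (rule subseq_order.order_trans[OF _ h]) simp
  moreover have "subseq [b,c,d] ys" by (rule subseq_order.order_trans[OF _ h]) simp
  ultimately show ?thesis by blast
qed

lemma P321_P21: "P321 t \<Longrightarrow> P21 t"
proof -
  assume "P321 t"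
  then obtain a b c where h: "subseq [a,b,c] t" "c < b" "b < a" unfolding P321_def by blast
  have "subseq [a,b] t" using sub3_drop[OF h(1)] by simp
  then show ?thesis unfolding P21_def using h by blast
qed
lemma P213_P21: "P213 t \<Longrightarrow> P21 t"
proof -
  assume "P213 t"
  then obtain a b c where h: "subseq [a,b,c] t" "b < a" "a < c" unfolding P213_def by blast
  have "subseq [a,b] t" using sub3_drop[OF h(1)] by simp
  then show ?thesis unfolding P21_def using h by blast
qed
lemma P3214_P213: "P3214 t \<Longrightarrow> P213 t"
proof -
  assume "P3214 t"
  then obtain a b c d where h: "subseq [a,b,c,d] t" "c < b" "b < a" "a < d" unfolding P3214_def by blast
  have "subseq [b,c,d] t" using sub4_drop[OF h(1)] by simp
  moreover have "b < d" using h by simp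
  ultimately show ?thesis unfolding P213_def using h by blast
qed
lemma P4213_P321: "P4213 t \<Longrightarrow> P321 t"
proof -
  assume "P4213 t"
  then obtain a b c d where h: "subseq [a,b,c,d] t" "c < b" "b < d" "d < a" unfolding P4213_def by blast
  have "subseq [a,b,c] t" using sub4_drop[OF h(1)] by simp
  moreover have "b < a" using h by simp
  ultimately show ?thesis unfolding P321_def using h by blast
qed

lemma subL1: "subseq ys A \<Longrightarrow> subseq ys (A@x#B)"
  by (simp add: subseq_rev_drop_many)
lemma subL2: "subseq ys B \<Longrightarrow> subseq ys (A@x#B)"
proof -
  assume "subseq ys B" then have "subseq ys (x#B)" by (rule list_emb_Cons)
  then show ?thesis by (rule subseq_drop_many)
qed
lemma subL3: "subseq ys A \<Longrightarrow> subseq (ys@[x]) (A@x#B)"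
  by (metis list_emb_Nil list_emb_append_mono subseq_Cons2)
lemma subL4: "subseq ys B \<Longrightarrow> subseq (x#ys) (A@x#B)"
  by (simp add: subseq_drop_many)
lemma subL5: "subseq ys A \<Longrightarrow> subseq zs B \<Longrightarrow> subseq (ys@zs) (A@x#B)"
proof -
  assume a: "subseq ys A" and "subseq zs B" then have "subseq zs (x#B)" by (intro list_emb_Cons)
  then show ?thesis using a by (intro list_emb_append_mono)
qed


locale blocks =
  fixes A B :: "nat list" and x :: nat
  assumes hAB: "\<And>a b. a \<in> set A \<Longrightarrow> b \<in> set B \<Longrightarrow> b < a"
    and hA: "\<And>a. a \<in> set A \<Longrightarrow> a < x"
    and hB: "\<And>b. b \<in> set B \<Longrightarrow> b < x"
begin

lemma L132: "P132 (A@x#B) \<Longrightarrow> P132 A \<or> P132 B"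
proof -
  assume "P132 (A@x#B)"
  then obtain a b c where s: "subseq [a,b,c] (A@x#B)" "a<c" "c<b" unfolding P132_def by blast
  from split3[OF s(1)] consider (1) "subseq [a,b,c] A" | (2) "subseq [a,b] A" "c \<in> set (x#B)"
     | (3) "a \<in> set A" "subseq [b,c] (x#B)" | (4) "subseq [a,b,c] (x#B)" by blast
  then show ?thesis
  proof cases
    case 1 then show ?thesis unfolding P132_def using s by blast
  next
    case 2
    then have "a \<in> set A" "b \<in> set A" using mem2[OF 2(1)] by simp_all
    then show ?thesis using 2(2) s hA[of b] hAB[of a c] by auto
  next
    case 3
    then have "b \<in> set (x#B)" "c \<in> set (x#B)" using mem2[OF 3(2)] by simp_all
    then show ?thesis using 3(1) s hB[of b] hAB[of a c] by auto
  next
    case 4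
    from cons_sub[OF this] show ?thesis
    proof
      assume "a = x \<and> subseq [b, c] B"
      then show ?thesis using mem2[of b c B] hB[of c] s by auto
    next
      assume "subseq [a,b,c] B" then show ?thesis unfolding P132_def using s by blast
    qed
  qed
qed


lemma L321: "P321 (A@x#B) \<Longrightarrow> P321 A \<or> P21 B \<or> (P21 A \<and> B \<noteq> [])"
proof -
  assume "P321 (A@x#B)"
  then obtain a b c where s: "subseq [a,b,c] (A@x#B)" "c<b" "b<a" unfolding P321_def by blast
  from split3[OF s(1)] consider (1) "subseq [a,b,c] A" | (2) "subseq [a,b] A" "c \<in> set (x#B)"
     | (3) "a \<in> set A" "subseq [b,c] (x#B)" | (4) "subseq [a,b,c] (x#B)" by blast
  then show ?thesis
  proof cases
    case 1 then show ?thesis unfolding P321_def using s by blast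
  next
    case 2
    then have "b \<in> set A" using mem2[OF 2(1)] by simp_all
    then have "c \<in> set B" using 2(2) s hA[of b] by auto
    then have "B \<noteq> []" by auto
    moreover have "P21 A" unfolding P21_def using 2(1) s by blast
    ultimately show ?thesis by blast
  next
    case 3
    from cons_sub[OF 3(2)] show ?thesis
    proof
      assume "b = x \<and> subseq [c] B"
      then show ?thesis using hA[OF 3(1)] s by auto
    next
      assume "subseq [b,c] B" then show ?thesis unfolding P21_def using s by blast
    qed
  next
    case 4
    from cons_sub[OF this] show ?thesis
    proof
      assume "a = x \<and> subseq [b, c] B"
      then show ?thesis unfolding P21_def using s by blast
    next
      assume hh: "subseq [a,b,c] B" then have "subseq [b,c] B" using sub3_drop[OF hh] by simp
      then show ?thesis unfolding P21_def using s by blast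
    qed
  qed
qed

lemma L213: "P213 (A@x#B) \<Longrightarrow> P21 A \<or> P213 B"
proof -
  assume "P213 (A@x#B)"
  then obtain a b c where s: "subseq [a,b,c] (A@x#B)" "b<a" "a<c" unfolding P213_def by blast
  from split3[OF s(1)] consider (1) "subseq [a,b,c] A" | (2) "subseq [a,b] A" "c \<in> set (x#B)"
     | (3) "a \<in> set A" "subseq [b,c] (x#B)" | (4) "subseq [a,b,c] (x#B)" by blast
  then show ?thesis
  proof cases
    case 1 then have "subseq [a,b] A" using sub3_drop[OF 1] by simp
    then show ?thesis unfolding P21_def using s by blast
  next
    case 2
    then show ?thesis unfolding P21_def using s by blast
  next
    case 3
    from cons_sub[OF 3(2)] show ?thesis
    proof
      assume "b = x \<and> subseq [c] B"
      then show ?thesis using hA[OF 3(1)] s by auto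
    next
      assume hh: "subseq [b,c] B" then have mB: "c \<in> set B" using mem2[OF hh] by simp
      then show ?thesis using hAB[OF 3(1) mB] s by auto
    qed
  next
    case 4
    from cons_sub[OF this] show ?thesis
    proof
      assume "a = x \<and> subseq [b, c] B"
      then have "c \<in> set B" "a = x" using mem2[of b c B] by simp_all
      then show ?thesis using hB[of c] s by auto
    next
      assume "subseq [a,b,c] B"
      then show ?thesis unfolding P213_def using s by blast
    qed
  qed
qed

lemma L3214: "P3214 (A@x#B) \<Longrightarrow> P321 A \<or> P3214 B"
proof -
  assume "P3214 (A@x#B)"
  then obtain a b c d where s: "subseq [a,b,c,d] (A@x#B)" "c<b" "b<a" "a<d" unfolding P3214_def by blast
  from split4[OF s(1)] consider (1) "subseq [a,b,c,d] A" | (2) "subseq [a,b,c] A" "d \<in> set (x#B)"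
     | (3) "subseq [a,b] A" "subseq [c,d] (x#B)" | (4) "a \<in> set A" "subseq [b,c,d] (x#B)"
     | (5) "subseq [a,b,c,d] (x#B)" by blast
  then show ?thesis
  proof cases
    case 1 then have "subseq [a,b,c] A" using sub4_drop[OF 1] by simp
    then show ?thesis unfolding P321_def using s by blast
  next
    case 2
    then show ?thesis unfolding P321_def using s by blast
  next
    case 3
    then have aA: "a \<in> set A" using mem2[OF 3(1)] by simp
    from cons_sub[OF 3(2)] show ?thesis
    proof
      assume "c = x \<and> subseq [d] B"
      then show ?thesis using hA[OF aA] s by auto
    next
      assume hh: "subseq [c,d] B" then have mB: "d \<in> set B" using mem2[OF hh] by simp
      then show ?thesis using hAB[OF aA mB] s by auto
    qed
  next
    case 4
    from cons_sub[OF 4(2)] show ?thesis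
    proof
      assume "b = x \<and> subseq [c,d] B"
      then show ?thesis using hA[OF 4(1)] s by auto
    next
      assume hh: "subseq [b,c,d] B" then have mB: "d \<in> set B" using mem3[OF hh] by simp
      then show ?thesis using hAB[OF 4(1) mB] s by auto
    qed
  next
    case 5
    from cons_sub[OF this] show ?thesis
    proof
      assume "a = x \<and> subseq [b,c,d] B"
      then have "d \<in> set B" "a = x" using mem3[of b c d B] by simp_all
      then show ?thesis using hB[of d] s by auto
    next
      assume "subseq [a,b,c,d] B"
      then show ?thesis unfolding P3214_def using s by blast
    qed
  qed
qed

lemma L4213: "P4213 (A@x#B) \<Longrightarrow> P4213 A \<or> P213 B"
proof -
  assume "P4213 (A@x#B)"
  then obtain a b c d where s: "subseq [a,b,c,d] (A@x#B)" "c<b" "b<d" "d<a" unfolding P4213_def by blast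
  from split4[OF s(1)] consider (1) "subseq [a,b,c,d] A" | (2) "subseq [a,b,c] A" "d \<in> set (x#B)"
     | (3) "subseq [a,b] A" "subseq [c,d] (x#B)" | (4) "a \<in> set A" "subseq [b,c,d] (x#B)"
     | (5) "subseq [a,b,c,d] (x#B)" by blast
  then show ?thesis
  proof cases
    case 1 then show ?thesis unfolding P4213_def using s by blast
  next
    case 2
    then have "a \<in> set A" "b \<in> set A" using mem3[OF 2(1)] by simp_all
    then show ?thesis using 2(2) s hA[of a] hAB[of b d] by auto
  next
    case 3
    then have "a \<in> set A" "b \<in> set A" using mem2[OF 3(1)] by simp_all
    moreover have "d \<in> set (x#B)" using mem2[OF 3(2)] by simp
    ultimately show ?thesis using s hA[of a] hAB[of b d] by auto
  next
    case 4
    from cons_sub[OF 4(2)] show ?thesis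
    proof
      assume "b = x \<and> subseq [c,d] B"
      then show ?thesis using hA[OF 4(1)] s by auto
    next
      assume "subseq [b,c,d] B"
      then show ?thesis unfolding P213_def using s by blast
    qed
  next
    case 5
    from cons_sub[OF this] show ?thesis
    proof
      assume "a = x \<and> subseq [b,c,d] B"
      then show ?thesis unfolding P213_def using s by blast
    next
      assume hh: "subseq [a,b,c,d] B"
      then have "subseq [b,c,d] B" using sub4_drop[OF hh] by simp
      then show ?thesis unfolding P213_def using s by blast
    qed
  qed
qed

lemma R132: "P132 A \<or> P132 B \<Longrightarrow> P132 (A@x#B)"
  unfolding P132_def using subL1 subL2 by blast

lemma R3214: "P321 A \<Longrightarrow> P3214 (A@x#B)"
proof -
  assume "P321 A"
  then obtain a b c where h: "subseq [a,b,c] A" "c<b" "b<a" unfolding P321_def by blast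
  have "subseq [a,b,c,x] (A@x#B)" using subL3[OF h(1)] by simp
  moreover have "a < x" using hA mem3[OF h(1)] by blast
  ultimately show ?thesis unfolding P3214_def using h by blast
qed

lemma R4213: "P213 B \<Longrightarrow> P4213 (A@x#B)"
proof -
  assume "P213 B"
  then obtain a b c where h: "subseq [a,b,c] B" "b<a" "a<c" unfolding P213_def by blast
  have "subseq [x,a,b,c] (A@x#B)" using subL4[OF h(1)] by simp
  moreover have "c < x" using hB mem3[OF h(1)] by blast
  ultimately show ?thesis unfolding P4213_def using h by blast
qed

lemma R321a: "P321 A \<Longrightarrow> P321 (A@x#B)"
  unfolding P321_def using subL1 by blast

lemma R321b: "P21 B \<Longrightarrow> P321 (A@x#B)"
proof -
  assume "P21 B"
  then obtain a b where h: "subseq [a,b] B" "b<a" unfolding P21_def by blast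
  have "subseq [x,a,b] (A@x#B)" using subL4[OF h(1)] by simp
  moreover have "a < x" using hB mem2[OF h(1)] by blast
  ultimately show ?thesis unfolding P321_def using h by blast
qed

lemma R321c: "P21 A \<Longrightarrow> B \<noteq> [] \<Longrightarrow> P321 (A@x#B)"
proof -
  assume "P21 A" "B \<noteq> []"
  then obtain a b where h: "subseq [a,b] A" "b<a" unfolding P21_def by blast
  obtain c B' where B: "B = c # B'" using \<open>B \<noteq> []\<close> by (cases B) auto
  have "subseq [c] B" using B by simp
  then have "subseq ([a,b]@[c]) (A@x#B)" using subL5[OF h(1)] by blast
  moreover have "c < b" using hAB mem2[OF h(1)] B by auto
  ultimately show ?thesis unfolding P321_def using h by auto
qed

lemma R213a: "P21 A \<Longrightarrow> P213 (A@x#B)"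
proof -
  assume "P21 A"
  then obtain a b where h: "subseq [a,b] A" "b<a" unfolding P21_def by blast
  have "subseq [a,b,x] (A@x#B)" using subL3[OF h(1)] by simp
  moreover have "a < x" using hA mem2[OF h(1)] by blast
  ultimately show ?thesis unfolding P213_def using h by blast
qed

lemma R213b: "P213 B \<Longrightarrow> P213 (A@x#B)"
  unfolding P213_def using subL2 by blast

lemma avA: "(\<not> P132 (A@x#B) \<and> \<not> P3214 (A@x#B) \<and> \<not> P4213 (A@x#B)) \<longleftrightarrow>
   (\<not> P132 A \<and> \<not> P132 B \<and> \<not> P321 A \<and> \<not> P213 B)"
  using L132 R132 L3214 R3214 L4213 R4213 P3214_P213 P4213_P321 by blast

lemma avB: "(\<not> P132 (A@x#B) \<and> \<not> P321 (A@x#B)) \<longleftrightarrow>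
   (\<not> P132 A \<and> \<not> P132 B \<and> \<not> P321 A \<and> \<not> P21 B \<and> (B \<noteq> [] \<longrightarrow> \<not> P21 A))"
  using L132 R132 L321 R321a R321b R321c by blast

lemma avC: "(\<not> P132 (A@x#B) \<and> \<not> P213 (A@x#B)) \<longleftrightarrow>
   (\<not> P132 A \<and> \<not> P132 B \<and> \<not> P21 A \<and> \<not> P213 B)"
  using L132 R132 L213 R213a R213b by blast

end


lemma map2: "subseq [a,b] (map f xs) \<longleftrightarrow> (\<exists>a' b'. subseq [a',b'] xs \<and> a = f a' \<and> b = f b')"
  unfolding subseq_map_iff by (auto simp: map_eq_Cons_conv)
lemma map3: "subseq [a,b,c] (map f xs) \<longleftrightarrow> (\<exists>a' b' c'. subseq [a',b',c'] xs \<and> a = f a' \<and> b = f b' \<and> c = f c')"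
  unfolding subseq_map_iff by (auto simp: map_eq_Cons_conv)
lemma map4: "subseq [a,b,c,d] (map f xs) \<longleftrightarrow> (\<exists>a' b' c' d'. subseq [a',b',c',d'] xs \<and> a = f a' \<and> b = f b' \<and> c = f c' \<and> d = f d')"
  unfolding subseq_map_iff by (auto simp: map_eq_Cons_conv)

lemma sh21: "P21 (map (\<lambda>v. v + m) xs) \<longleftrightarrow> P21 xs"
  unfolding P21_def map2 by (auto; blast intro: add_less_mono1)
lemma sh132: "P132 (map (\<lambda>v. v + m) xs) \<longleftrightarrow> P132 xs"
  unfolding P132_def map3 by (auto; blast intro: add_less_mono1)
lemma sh321: "P321 (map (\<lambda>v. v + m) xs) \<longleftrightarrow> P321 xs"
  unfolding P321_def map3 by (auto; blast intro: add_less_mono1)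
lemma sh213: "P213 (map (\<lambda>v. v + m) xs) \<longleftrightarrow> P213 xs"
  unfolding P213_def map3 by (auto; blast intro: add_less_mono1)

lemma sorted_sub: "subseq xs ys \<Longrightarrow> sorted_wrt (<) ys \<Longrightarrow> sorted_wrt (<) (xs::nat list)"
  by (induction rule: list_emb.induct) (auto dest: subseq_set)

lemma perms0: "perms 0 = {[]}"
  unfolding perms_def by auto

lemma perms_len: "t \<in> perms n \<Longrightarrow> length t = n"
  unfolding perms_def using distinct_card[of t] by simp

lemma finite_perms: "finite (perms n)"
proof -
  have "perms n \<subseteq> {xs. set xs \<subseteq> {1..n} \<and> length xs = n}"
    using perms_len unfolding perms_def by auto
  then show ?thesis by (rule finite_subset) (simp add: finite_lists_length_eq)
qed

lemma inc_perm: "{t \<in> perms k. \<not> P21 t} = {[1..<Suc k]}"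
proof
  show "{[1..<Suc k]} \<subseteq> {t \<in> perms k. \<not> P21 t}"
  proof -
    have "\<not> P21 [1..<Suc k]"
    proof
      assume "P21 [1..<Suc k]"
      then obtain a b where h: "subseq [a,b] [1..<Suc k]" "b < a" unfolding P21_def by blast
      have "sorted_wrt (<) [a,b]" by (rule sorted_sub[OF h(1)]) (rule sorted_wrt_upt)
      then show False using h(2) by simp
    qed
    moreover have "[1..<Suc k] \<in> perms k" unfolding perms_def by auto
    ultimately show ?thesis by simp
  qed
next
  show "{t \<in> perms k. \<not> P21 t} \<subseteq> {[1..<Suc k]}"
  proof
    fix t assume t: "t \<in> {t \<in> perms k. \<not> P21 t}"
    have "sorted_wrt (<) t"
      unfolding sorted_wrt_iff_nth_less
    proof (intro allI impI)
      fix i j assume ij: "i < j" "j < length t"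
      let ?idx = "\<lambda>a::nat. if a = 0 then i else j"
      have "subseq (map (\<lambda>a. t ! ?idx a) [0..<2]) t"
        by (rule idx_subseq) (use ij in auto)
      moreover have "map (\<lambda>a. t ! ?idx a) [0..<2] = [t!i, t!j]" by (simp add: numeral_2_eq_2)
      ultimately have s: "subseq [t!i, t!j] t" by simp
      have "t!i \<noteq> t!j" using t ij unfolding perms_def by (simp add: nth_eq_iff_index_eq)
      show "t!i < t!j"
      proof (rule ccontr)
        assume "\<not> t!i < t!j"
        then have "t!j < t!i" using \<open>t!i \<noteq> t!j\<close> by simp
        then have "P21 t" unfolding P21_def using s by blast
        then show False using t by simp
      qed
    qed
    then have "sorted t" "distinct t" unfolding strict_sorted_iff by simp_all
    moreover have "set t = set [1..<Suc k]"
    proof -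
      have "set [1..<Suc k] = {1..k}" by (simp only: set_upt atLeastLessThanSuc_atLeastAtMost)
      then show ?thesis using t unfolding perms_def by simp
    qed
    ultimately have "t = [1..<Suc k]" by (rule sorted_distinct_set_unique[OF _ _ sorted_upt distinct_upt])
    then show "t \<in> {[1..<Suc k]}" by simp
  qed
qed

lemma card_inc: "card {t \<in> perms k. \<not> P21 t} = 1"
  by (simp add: inc_perm)


definition J :: "nat \<Rightarrow> nat \<Rightarrow> nat list \<Rightarrow> nat list \<Rightarrow> nat list" where
  "J n m al be = map (\<lambda>v. v + m) al @ Suc n # be"

lemma perms_D: "t \<in> perms n \<Longrightarrow> distinct t \<and> set t = {1..n}"
  unfolding perms_def by simp

lemma set_shift: "al \<in> perms k \<Longrightarrow> set (map (\<lambda>v. v + m) al) = {Suc m..k + m}"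
proof -
  assume "al \<in> perms k"
  then have s: "set al = {1..k}" using perms_D by blast
  have "(\<lambda>v. v + m) ` {1..k} = {Suc m..k + m}"
  proof
    show "(\<lambda>v. v + m) ` {1..k} \<subseteq> {Suc m..k + m}" by auto
    show "{Suc m..k + m} \<subseteq> (\<lambda>v. v + m) ` {1..k}"
    proof
      fix y assume "y \<in> {Suc m..k + m}"
      then have "y - m \<in> {1..k}" "y = (y - m) + m" by auto
      then show "y \<in> (\<lambda>v. v + m) ` {1..k}" by (metis image_eqI)
    qed
  qed
  then show ?thesis using s by simp
qed

lemma J_perm: "m \<le> n \<Longrightarrow> al \<in> perms (n - m) \<Longrightarrow> be \<in> perms m \<Longrightarrow> J n m al be \<in> perms (Suc n)"
proof -
  assume mn: "m \<le> n" and a: "al \<in> perms (n - m)" and b: "be \<in> perms m"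
  have sa: "set (map (\<lambda>v. v + m) al) = {Suc m..n}" using set_shift[OF a] mn by simp
  have sb: "set be = {1..m}" "distinct be" using perms_D[OF b] by auto
  have da: "distinct (map (\<lambda>v. v + m) al)" using perms_D[OF a] by (simp add: distinct_map)
  have "distinct (J n m al be)" unfolding J_def using sa sb da mn by auto
  moreover have "set (J n m al be) = {1..Suc n}" unfolding J_def using sa sb mn by auto
  ultimately show ?thesis unfolding perms_def by simp
qed

lemma J_blocks: "m \<le> n \<Longrightarrow> al \<in> perms (n - m) \<Longrightarrow> be \<in> perms m \<Longrightarrow> blocks (map (\<lambda>v. v + m) al) be (Suc n)"
proof -
  assume mn: "m \<le> n" and a: "al \<in> perms (n - m)" and b: "be \<in> perms m"
  have sa: "set (map (\<lambda>v. v + m) al) = {Suc m..n}" using set_shift[OF a] mn by simp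
  have sb: "set be = {1..m}" using perms_D[OF b] by auto
  show ?thesis
    by unfold_locales (use sa sb mn in auto)
qed

lemma subL6: "subseq ys A \<Longrightarrow> subseq zs B \<Longrightarrow> subseq (ys @ x # zs) (A@x#B)"
proof -
  assume a: "subseq ys A" and "subseq zs B" then have "subseq (x#zs) (x#B)" by (intro list_emb_Cons2) simp_all
  then show ?thesis using a by (intro list_emb_append_mono)
qed

lemma J_surj:
  assumes t: "t \<in> perms (Suc n)" and np: "\<not> P132 t"
  shows "\<exists>m al be. m \<le> n \<and> al \<in> perms (n - m) \<and> be \<in> perms m \<and> t = J n m al be"
proof -
  have dt: "distinct t" and st: "set t = {1..Suc n}" using perms_D[OF t] by auto
  have "Suc n \<in> set t" using st by simp
  then obtain A0 B where tAB: "t = A0 @ Suc n # B" by (meson split_list)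
  have dA: "distinct A0" and dB: "distinct B" and nA: "Suc n \<notin> set A0" and nB: "Suc n \<notin> set B"
    and disj: "set A0 \<inter> set B = {}" using dt tAB by auto
  have sU: "set A0 \<union> set B = {1..n}"
  proof -
    have "set t = insert (Suc n) (set A0 \<union> set B)" using tAB by auto
    then have "set A0 \<union> set B = set t - {Suc n}" using nA nB by auto
    also have "\<dots> = {1..n}" using st by auto
    finally show ?thesis .
  qed
  have AB: "b < a" if aA: "a \<in> set A0" and bB: "b \<in> set B" for a b
  proof (rule ccontr)
    assume "\<not> b < a"
    moreover have "a \<noteq> b" using disj aA bB by auto
    ultimately have ab: "a < b" by simp
    have "b \<le> n" using sU bB by auto
    have "subseq ([a] @ Suc n # [b]) t" unfolding tAB
      by (rule subL6) (use aA bB in \<open>simp_all add: subseq_singleton_left\<close>)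
    then have "P132 t" unfolding P132_def using ab \<open>b \<le> n\<close> by (intro exI[of _ a] exI[of _ "Suc n"] exI[of _ b]) simp
    then show False using np by simp
  qed
  define m where "m = length B"
  have cB: "card (set B) = m" unfolding m_def using dB by (simp add: distinct_card)
  have down: "y \<in> set B" if xB: "x \<in> set B" and y1: "1 \<le> y" and yx: "y < x" for x y
  proof -
    have "x \<le> n" using sU xB by auto
    then have "y \<in> set A0 \<union> set B" using sU y1 yx by auto
    moreover have "y \<notin> set A0" using AB[OF _ xB] yx by (meson less_not_sym)
    ultimately show ?thesis by simp
  qed
  have sB: "set B = {1..m}"
  proof -
    have sub: "set B \<subseteq> {1..m}"
    proof
      fix x assume xB: "x \<in> set B"
      have "{1..x} \<subseteq> set B" using down[OF xB] xB
        by (metis atLeastAtMost_iff le_eq_less_or_eq subsetI)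
      then have "card {1..x} \<le> card (set B)" by (rule card_mono[OF List.finite_set])
      then have "x \<le> m" using cB by simp
      moreover have "1 \<le> x" using xB sU by auto
      ultimately show "x \<in> {1..m}" by simp
    qed
    moreover have "card (set B) = card {1..m}" using cB by simp
    ultimately show ?thesis by (simp add: card_subset_eq)
  qed
  have mn: "m \<le> n"
  proof (cases "m = 0")
    case False
    then have "m \<in> set B" using sB by simp
    then show ?thesis using sU by auto
  qed simp
  have sA: "set A0 = {Suc m..n}"
  proof (intro equalityI subsetI)
    fix y assume y: "y \<in> set A0"
    then have "y \<in> {1..n}" using sU by blast
    moreover have "y \<notin> {1..m}" using disj sB y by blast
    ultimately show "y \<in> {Suc m..n}" by simp
  next
    fix y assume "y \<in> {Suc m..n}"
    then have "y \<in> set A0 \<union> set B" "y \<notin> set B" using sU sB by auto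
    then show "y \<in> set A0" by simp
  qed
  define al where "al = map (\<lambda>v. v - m) A0"
  have hback: "map (\<lambda>v. v + m) al = A0" unfolding al_def map_map by (rule map_idI) (use sA in auto)
  have inj: "inj_on (\<lambda>v. v - m) (set A0)" using sA by (auto simp: inj_on_def)
  have dal: "distinct al" unfolding al_def using dA inj by (simp add: distinct_map)
  have sal: "set al = {1..n - m}"
  proof
    show "set al \<subseteq> {1..n - m}" unfolding al_def using sA by auto
    show "{1..n - m} \<subseteq> set al"
    proof
      fix y assume y: "y \<in> {1..n - m}"
      then have "y + m \<in> set A0" "y = (y + m) - m" using sA by auto
      then show "y \<in> set al" unfolding al_def by (metis image_eqI set_map)
    qed
  qed
  have "al \<in> perms (n - m)" unfolding perms_def using dal sal by simp
  moreover have "B \<in> perms m" unfolding perms_def using dB sB by simp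
  moreover have "t = J n m al B" unfolding J_def hback tAB ..
  ultimately show ?thesis using mn by blast
qed

lemma J_inj:
  assumes "m \<le> n" "al \<in> perms (n - m)" "be \<in> perms m"
    and "m' \<le> n" "al' \<in> perms (n - m')" "be' \<in> perms m'"
    and eq: "J n m al be = J n m' al' be'"
  shows "m = m' \<and> al = al' \<and> be = be'"
proof -
  have s1: "set (map (\<lambda>v. v + m) al) = {Suc m..n}" using set_shift[OF assms(2)] assms(1) by simp
  have s2: "set (map (\<lambda>v. v + m') al') = {Suc m'..n}" using set_shift[OF assms(5)] assms(4) by simp
  have n1: "Suc n \<notin> set (map (\<lambda>v. v + m) al)" using s1 by auto
  have n2: "Suc n \<notin> set be" using perms_D[OF assms(3)] assms(1) by auto
  have "map (\<lambda>v. v + m) al @ Suc n # be = map (\<lambda>v. v + m') al' @ Suc n # be' \<longleftrightarrow>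
     (map (\<lambda>v. v + m) al = map (\<lambda>v. v + m') al' \<and> be = be')"
    by (rule append_Cons_eq_iff[OF n1 n2])
  then have e: "map (\<lambda>v. v + m) al = map (\<lambda>v. v + m') al'" "be = be'"
    using eq unfolding J_def by simp_all
  have "m = m'" using e(2) perms_len[OF assms(3)] perms_len[OF assms(6)] by simp
  moreover have "al = al'" using e(1) \<open>m = m'\<close> by (simp add: inj_map_eq_map inj_on_def)
  ultimately show ?thesis using e(2) by simp
qed


lemma card_dec:
  assumes Q: "\<And>m al be. m \<le> n \<Longrightarrow> al \<in> perms (n-m) \<Longrightarrow> be \<in> perms m \<Longrightarrow>
     (\<not> P132 (J n m al be) \<and> R (J n m al be)) = Q m al be"
  shows "card {t \<in> perms (Suc n). \<not> P132 t \<and> R t} =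
    (\<Sum>m\<le>n. card {(al,be). al \<in> perms (n-m) \<and> be \<in> perms m \<and> Q m al be})"
proof -
  define D where "D = (SIGMA m:{..n}. {(al,be). al \<in> perms (n-m) \<and> be \<in> perms m \<and> Q m al be})"
  define f where "f = (\<lambda>(m::nat, al::nat list, be::nat list). J n m al be)"
  have img: "{t \<in> perms (Suc n). \<not> P132 t \<and> R t} = f ` D"
  proof (intro equalityI subsetI)
    fix t assume t: "t \<in> {t \<in> perms (Suc n). \<not> P132 t \<and> R t}"
    then obtain m al be where h: "m \<le> n" "al \<in> perms (n - m)" "be \<in> perms m" "t = J n m al be"
      using J_surj by blast
    then have "Q m al be" using Q t by blast
    then have "(m, al, be) \<in> D" unfolding D_def using h by simp
    then show "t \<in> f ` D" unfolding f_def using h(4) by force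
  next
    fix t assume "t \<in> f ` D"
    then obtain m al be where h: "m \<le> n" "al \<in> perms (n - m)" "be \<in> perms m" "Q m al be" "t = J n m al be"
      unfolding D_def f_def by auto
    then show "t \<in> {t \<in> perms (Suc n). \<not> P132 t \<and> R t}" using Q[OF h(1-3)] J_perm[OF h(1-3)] by simp
  qed
  have inj: "inj_on f D"
  proof (rule inj_onI)
    fix u v assume u: "u \<in> D" and v: "v \<in> D" and e: "f u = f v"
    obtain m al be where u': "u = (m, al, be)" by (cases u) auto
    obtain m' al' be' where v': "v = (m', al', be')" by (cases v) auto
    show "u = v" using J_inj[of m n al be m' al' be'] u v e unfolding u' v' D_def f_def by auto
  qed
  have fin: "finite {(al,be). al \<in> perms (n-m) \<and> be \<in> perms m \<and> Q m al be}" for m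
  proof -
    have "{(al,be). al \<in> perms (n-m) \<and> be \<in> perms m \<and> Q m al be} \<subseteq> perms (n-m) \<times> perms m" by auto
    then show ?thesis using finite_perms by (meson finite_SigmaI finite_subset)
  qed
  have "card {t \<in> perms (Suc n). \<not> P132 t \<and> R t} = card D" unfolding img by (rule card_image[OF inj])
  also have "\<dots> = (\<Sum>m\<le>n. card {(al,be). al \<in> perms (n-m) \<and> be \<in> perms m \<and> Q m al be})"
    unfolding D_def by (rule card_SigmaI) (use fin in auto)
  finally show ?thesis .
qed

definition SA :: "nat \<Rightarrow> nat list set" where "SA n = {t \<in> perms n. \<not> P132 t \<and> \<not> P3214 t \<and> \<not> P4213 t}"
definition SB :: "nat \<Rightarrow> nat list set" where "SB n = {t \<in> perms n. \<not> P132 t \<and> \<not> P321 t}"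
definition SC :: "nat \<Rightarrow> nat list set" where "SC n = {t \<in> perms n. \<not> P132 t \<and> \<not> P213 t}"

lemma P132_P21: "P132 t \<Longrightarrow> P21 t"
proof -
  assume "P132 t"
  then obtain a b c where h: "subseq [a,b,c] t" "a < c" "c < b" unfolding P132_def by blast
  have "subseq [b,c] t" using sub3_drop[OF h(1)] by simp
  then show ?thesis unfolding P21_def using h by blast
qed

lemma nil_av: "\<not> P21 [] \<and> \<not> P132 [] \<and> \<not> P321 [] \<and> \<not> P213 [] \<and> \<not> P3214 [] \<and> \<not> P4213 []"
  unfolding P21_def P132_def P321_def P213_def P3214_def P4213_def by simp

lemma card0: "card (SA 0) = 1" "card (SB 0) = 1" "card (SC 0) = 1"
proof -
  have "SA 0 = {[]}" "SB 0 = {[]}" "SC 0 = {[]}" unfolding SA_def SB_def SC_def perms0 using nil_av by auto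
  then show "card (SA 0) = 1" "card (SB 0) = 1" "card (SC 0) = 1" by simp_all
qed

lemma QA: "m \<le> n \<Longrightarrow> al \<in> perms (n-m) \<Longrightarrow> be \<in> perms m \<Longrightarrow>
  (\<not> P132 (J n m al be) \<and> (\<not> P3214 (J n m al be) \<and> \<not> P4213 (J n m al be))) =
  (\<not> P132 al \<and> \<not> P132 be \<and> \<not> P321 al \<and> \<not> P213 be)"
  using blocks.avA[OF J_blocks] unfolding J_def by (simp add: sh132 sh321)

lemma QB: "m \<le> n \<Longrightarrow> al \<in> perms (n-m) \<Longrightarrow> be \<in> perms m \<Longrightarrow>
  (\<not> P132 (J n m al be) \<and> \<not> P321 (J n m al be)) =
  (\<not> P132 al \<and> \<not> P132 be \<and> \<not> P321 al \<and> \<not> P21 be \<and> (be \<noteq> [] \<longrightarrow> \<not> P21 al))"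
  using blocks.avB[OF J_blocks] unfolding J_def by (simp add: sh132 sh321 sh21)

lemma QC: "m \<le> n \<Longrightarrow> al \<in> perms (n-m) \<Longrightarrow> be \<in> perms m \<Longrightarrow>
  (\<not> P132 (J n m al be) \<and> \<not> P213 (J n m al be)) =
  (\<not> P132 al \<and> \<not> P132 be \<and> \<not> P21 al \<and> \<not> P213 be)"
  using blocks.avC[OF J_blocks] unfolding J_def by (simp add: sh132 sh21)

lemma recA: "card (SA (Suc n)) = (\<Sum>m\<le>n. card (SB (n-m)) * card (SC m))"
proof -
  have "card (SA (Suc n)) = (\<Sum>m\<le>n. card {(al,be). al \<in> perms (n-m) \<and> be \<in> perms m \<and>
      (\<not> P132 al \<and> \<not> P132 be \<and> \<not> P321 al \<and> \<not> P213 be)})"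
    unfolding SA_def by (rule card_dec) (rule QA)
  also have "\<dots> = (\<Sum>m\<le>n. card (SB (n-m) \<times> SC m))"
    by (rule sum.cong) (auto simp: SB_def SC_def intro!: arg_cong[where f=card])
  also have "\<dots> = (\<Sum>m\<le>n. card (SB (n-m)) * card (SC m))"
    by (simp add: card_cartesian_product)
  finally show ?thesis .
qed

lemma recC: "card (SC (Suc n)) = (\<Sum>m\<le>n. card (SC m))"
proof -
  have "card (SC (Suc n)) = (\<Sum>m\<le>n. card {(al,be). al \<in> perms (n-m) \<and> be \<in> perms m \<and>
      (\<not> P132 al \<and> \<not> P132 be \<and> \<not> P21 al \<and> \<not> P213 be)})"
    unfolding SC_def by (rule card_dec) (rule QC)
  also have "\<dots> = (\<Sum>m\<le>n. card ({al \<in> perms (n-m). \<not> P21 al} \<times> SC m))"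
    by (rule sum.cong) (auto simp: SC_def intro!: arg_cong[where f=card] dest: P132_P21)
  also have "\<dots> = (\<Sum>m\<le>n. card (SC m))"
    by (simp add: card_cartesian_product card_inc)
  finally show ?thesis .
qed

lemma recB: "card (SB (Suc n)) = card (SB n) + n"
proof -
  have "card (SB (Suc n)) = (\<Sum>m\<le>n. card {(al,be). al \<in> perms (n-m) \<and> be \<in> perms m \<and>
      (\<not> P132 al \<and> \<not> P132 be \<and> \<not> P321 al \<and> \<not> P21 be \<and> (be \<noteq> [] \<longrightarrow> \<not> P21 al))})"
    unfolding SB_def by (rule card_dec) (rule QB)
  also have "\<dots> = (\<Sum>m\<le>n. if m = 0 then card (SB n) else 1)"
  proof (rule sum.cong)
    fix m assume m: "m \<in> {..n}"
    show "card {(al,be). al \<in> perms (n-m) \<and> be \<in> perms m \<and>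
      (\<not> P132 al \<and> \<not> P132 be \<and> \<not> P321 al \<and> \<not> P21 be \<and> (be \<noteq> [] \<longrightarrow> \<not> P21 al))}
      = (if m = 0 then card (SB n) else 1)"
    proof (cases "m = 0")
      case True
      have "{(al,be). al \<in> perms (n-m) \<and> be \<in> perms m \<and>
      (\<not> P132 al \<and> \<not> P132 be \<and> \<not> P321 al \<and> \<not> P21 be \<and> (be \<noteq> [] \<longrightarrow> \<not> P21 al))} = SB n \<times> {[]}"
        unfolding SB_def True perms0 using nil_av by auto
      then show ?thesis using True by (simp add: card_cartesian_product)
    next
      case False
      have ne: "be \<in> perms m \<Longrightarrow> be \<noteq> []" for be using perms_len[of be m] False by auto
      have "{(al,be). al \<in> perms (n-m) \<and> be \<in> perms m \<and>
      (\<not> P132 al \<and> \<not> P132 be \<and> \<not> P321 al \<and> \<not> P21 be \<and> (be \<noteq> [] \<longrightarrow> \<not> P21 al))} =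
        {al \<in> perms (n-m). \<not> P21 al} \<times> {be \<in> perms m. \<not> P21 be}"
        using ne by (auto dest: P132_P21 P321_P21)
      then show ?thesis using False by (simp add: card_cartesian_product card_inc)
    qed
  qed simp
  also have "\<dots> = card (SB n) + n"
  proof -
    have "(\<Sum>m\<le>n. if m = 0 then card (SB n) else 1) = (\<Sum>m\<in>insert 0 {1..n}. if m = 0 then card (SB n) else 1)"
      by (rule sum.cong) auto
    also have "\<dots> = card (SB n) + (\<Sum>m\<in>{1..n}. if m = 0 then card (SB n) else 1)"
      by (subst sum.insert) auto
    also have "(\<Sum>m\<in>{1..n}. if m = 0 then card (SB n) else 1) = (\<Sum>m\<in>{1..n}. (1::nat))"
      by (rule sum.cong) auto
    finally show ?thesis by simp
  qed
  finally show ?thesis .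
qed


lemma cC: "card (SC (Suc n)) = 2 ^ n"
proof (induction n)
  case 0
  then show ?case using recC[of 0] card0 by simp
next
  case (Suc n)
  have "card (SC (Suc (Suc n))) = (\<Sum>m\<le>Suc n. card (SC m))" by (rule recC)
  also have "\<dots> = (\<Sum>m\<le>n. card (SC m)) + card (SC (Suc n))" by simp
  also have "\<dots> = 2 ^ n + 2 ^ n" using recC[of n] Suc.IH by simp
  finally show ?case by simp
qed

definition U :: "nat \<Rightarrow> nat" where "U n = (\<Sum>m\<le>n. card (SB (n-m)) * 2 ^ m)"

lemma U_Suc: "U (Suc n) = card (SB (Suc n)) + 2 * U n"
proof -
  have "U (Suc n) = card (SB (Suc n)) * 2^0 + (\<Sum>m\<le>n. card (SB (Suc n - Suc m)) * 2 ^ (Suc m))"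
    unfolding U_def sum.atMost_Suc_shift by simp
  also have "(\<Sum>m\<le>n. card (SB (Suc n - Suc m)) * 2 ^ (Suc m)) = 2 * U n"
    unfolding U_def sum_distrib_left by (rule sum.cong) auto
  finally show ?thesis by simp
qed

lemma U_val: "U n + card (SB (Suc n)) + n + 2 = 2 ^ (n + 2)"
proof (induction n)
  case 0
  then show ?case using card0 recB[of 0] by (simp add: U_def)
next
  case (Suc n)
  have "U (Suc n) + card (SB (Suc (Suc n))) + Suc n + 2
      = card (SB (Suc n)) + 2 * U n + (card (SB (Suc n)) + Suc n) + Suc n + 2"
    using U_Suc[of n] recB[of "Suc n"] by simp
  also have "\<dots> = 2 * (U n + card (SB (Suc n)) + n + 2)" by simp
  also have "\<dots> = 2 ^ (Suc n + 2)" using Suc.IH by simp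
  finally show ?case .
qed

lemma A_val: "card (SA (Suc n)) + n + 1 = 2 ^ (n + 1)"
proof (cases n)
  case 0
  then show ?thesis using recA[of 0] card0 by simp
next
  case (Suc k)
  have "card (SA (Suc (Suc k))) = card (SB (Suc k - 0)) * card (SC 0) + (\<Sum>m\<le>k. card (SB (Suc k - Suc m)) * card (SC (Suc m)))"
    unfolding recA by (rule sum.atMost_Suc_shift)
  also have "\<dots> = card (SB (Suc k)) + U k"
    unfolding U_def using card0 cC by simp
  finally have "card (SA (Suc (Suc k))) = card (SB (Suc k)) + U k" .
  then show ?thesis using U_val[of k] Suc by simp
qed

theorem mainTheorem3:
  fixes n :: nat
  shows "int (card (Av n [[1,3,2], [3,2,1,4], [4,2,1,3]])) = 2 ^ n - int n"
proof -
  have e: "Av n [[1,3,2], [3,2,1,4], [4,2,1,3]] = SA n" unfolding Av_eq SA_def ..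
  have "int (card (SA n)) = 2 ^ n - int n"
  proof (cases n)
    case 0
    then show ?thesis using card0 by simp
  next
    case (Suc k)
    have "card (SA (Suc k)) + k + 1 = 2 ^ (k + 1)" by (rule A_val)
    then have "int (card (SA (Suc k))) + int k + 1 = 2 ^ (k + 1)" by (metis of_nat_1 of_nat_add of_nat_numeral of_nat_power)
    then show ?thesis unfolding Suc by simp
  qed
  then show ?thesis unfolding e .
qed


end
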